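(* Let $X=\{0,1\}$ and $c\geq1$. Let $\widetilde K_{1,00}(c)$ be the set of all $w\in X^c$ such that the sequence $(1,00,w)$ is not a code, and let $J_{1,00}(c)$ be the set of all words $w\in X^c$ of the form $w=1^{i_1}(00)^{j_1}1^{i_2}(00)^{j_2}\cdots1^{i_k}(00)^{j_k}$ for some $k\geq1$ and integers $i_l,j_l\geq0$. Then $\widetilde K_{1,00}(c)=J_{1,00}(c)\cup\{0^c\}$, and $$|\widetilde K_{1,00}(c)|=F_{c+1}+(c)_2,$$ where $F_k$ is the $k$-th Fibonacci number ($F_0=0$, $F_1=1$, $F_{k}=F_{k-1}+F_{k-2}$) and $(c)_2\in\{0,1\}$ is the remainder of $c$ modulo $2$.
   Context: For a letter or word $u$, $u^i$ denotes the concatenation of $i$ copies of $u$ ($u^0$ is the empty word). A code over $X$ is a finite sequence $C=(v_1,\ldots,v_m)$ of words over $X$ such that every $w\in X^*$ has at most one factorization into code-words: if $w=v_{i_1}\cdots v_{i_l}=v_{j_1}\cdots v_{j_{l'}}$ with $l,l'\geq1$, then $l=l'$ and $i_t=j_t$ for all $t$. *)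

theory Defs
  imports "HOL-Number_Theory.Fib"
begin

text \<open>Words over the alphabet X = {0,1} are lists of naturals with entries in {0,1}.
A code is a finite sequence (list) of words; factorizations are sequences of indices.\<close>

type_synonym word = "nat list"

definition binword :: "word \<Rightarrow> bool" where
  "binword w \<longleftrightarrow> set w \<subseteq> {0, 1}"

definition is_code :: "word list \<Rightarrow> bool" where
  "is_code C \<longleftrightarrow>
     (\<forall>is js. is \<noteq> [] \<longrightarrow> js \<noteq> [] \<longrightarrow>
        set is \<subseteq> {..<length C} \<longrightarrow> set js \<subseteq> {..<length C} \<longrightarrow>
        concat (map ((!) C) is) = concat (map ((!) C) js) \<longrightarrow> is = js)"

definition K_tilde :: "nat \<Rightarrow> word set" where
  "K_tilde c = {w. binword w \<and> length w = c \<and> \<not> is_code [[1], [0,0], w]}"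

definition J_set :: "nat \<Rightarrow> word set" where
  "J_set c = {w. binword w \<and> length w = c \<and>
     (\<exists>k\<ge>1. \<exists>i j :: nat \<Rightarrow> nat.
        w = concat (map (\<lambda>l. replicate (i l) 1 @ concat (replicate (j l) [0,0])) [0..<k]))}"

end

theory Submission imports Defs begin

inductive onezz :: "nat list \<Rightarrow> bool" where
  oz_nil: "onezz []"
| oz_one: "onezz s \<Longrightarrow> onezz (1 # s)"
| oz_zz: "onezz s \<Longrightarrow> onezz (0 # 0 # s)"

inductive_simps oz_cons: "onezz (x # s)"
inductive_simps oz_nil': "onezz []"
lemma onezz_simps[simp]:
  "onezz [] = True"
  "onezz (1 # s) = onezz s"
  "onezz (Suc 0 # s) = onezz s"
  "onezz (0 # Suc 0 # s) = False"
  "onezz (0 # 0 # s) = onezz s"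
  "onezz [0] = False"
  "onezz (0 # 1 # s) = False"
  by (simp_all add: oz_cons oz_nil')
lemma onezz_Cons_cases:
  "onezz (x # s) \<Longrightarrow> (x = 1 \<and> onezz s) \<or> (x = 0 \<and> (\<exists>s'. s = 0 # s' \<and> onezz s'))"
  by (simp add: oz_cons)

lemma onezz_append: "onezz s \<Longrightarrow> onezz t \<Longrightarrow> onezz (s @ t)"
  by (induction s rule: onezz.induct) simp_all

lemma onezz_rev: "onezz s \<Longrightarrow> onezz (rev s)"
  by (induction s rule: onezz.induct) (simp_all add: onezz_append)

lemma onezz_bin: "onezz s \<Longrightarrow> binword s"
  by (induction s rule: onezz.induct) (auto simp: binword_def)

lemma onezz_nonempty_one:
  "onezz x \<Longrightarrow> 1 \<in> set x \<Longrightarrow> \<exists>k y. x = replicate (2*k) 0 @ 1 # y"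
proof (induction x rule: onezz.induct)
  case oz_nil then show ?case by simp
next
  case (oz_one s) then show ?case by (intro exI[of _ 0] exI[of _ s]) simp
next
  case (oz_zz s)
  then obtain k y where "s = replicate (2*k) 0 @ 1 # y" by auto
  then show ?case by (intro exI[of _ "Suc k"] exI[of _ y]) simp
qed

lemma onezz_G:
  "onezz s \<Longrightarrow> onezz v \<Longrightarrow> s @ 0 # 1 # x = v @ 0 # 1 # z \<Longrightarrow> s = v"
proof (induction s arbitrary: v rule: onezz.induct)
  case oz_nil
  show ?case
  proof (cases v)
    case Nil then show ?thesis by simp
  next
    case (Cons a v')
    from oz_nil.prems(1) Cons have "(a = 1 \<and> onezz v') \<or> (a = 0 \<and> (\<exists>s'. v' = 0 # s' \<and> onezz s'))"
      using onezz_Cons_cases by blast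
    then show ?thesis using oz_nil.prems(2) Cons by auto
  qed
next
  case (oz_one s)
  show ?case
  proof (cases v)
    case Nil then show ?thesis using oz_one.prems by simp
  next
    case (Cons a v')
    from oz_one.prems(1) Cons have "(a = 1 \<and> onezz v') \<or> (a = 0 \<and> (\<exists>s'. v' = 0 # s' \<and> onezz s'))"
      using onezz_Cons_cases by blast
    then show ?thesis
    proof
      assume h: "a = 1 \<and> onezz v'"
      then have "s @ 0 # 1 # x = v' @ 0 # 1 # z" using oz_one.prems(2) Cons by simp
      then have "s = v'" using oz_one.IH h by blast
      then show ?thesis using Cons h by simp
    next
      assume "a = 0 \<and> (\<exists>s'. v' = 0 # s' \<and> onezz s')"
      then show ?thesis using oz_one.prems(2) Cons by auto
    qed
  qed
next
  case (oz_zz s)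
  show ?case
  proof (cases v)
    case Nil then show ?thesis using oz_zz.prems by simp
  next
    case (Cons a v')
    from oz_zz.prems(1) Cons have "(a = 1 \<and> onezz v') \<or> (a = 0 \<and> (\<exists>s'. v' = 0 # s' \<and> onezz s'))"
      using onezz_Cons_cases by blast
    then show ?thesis
    proof
      assume h: "a = 1 \<and> onezz v'"
      then show ?thesis using oz_zz.prems(2) Cons by simp
    next
      assume "a = 0 \<and> (\<exists>s'. v' = 0 # s' \<and> onezz s')"
      then obtain s' where h: "a = 0" "v' = 0 # s'" "onezz s'" by blast
      then have "s @ 0 # 1 # x = s' @ 0 # 1 # z" using oz_zz.prems(2) Cons by simp
      then have "s = s'" using oz_zz.IH h by blast
      then show ?thesis using Cons h by simp
    qed
  qed
qed

lemma decomp: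
  "binword w \<Longrightarrow> onezz w \<or> (\<exists>v r. onezz v \<and> (w = v @ [0] \<or> w = v @ 0 # 1 # r))"
proof (induction w rule: induct_list012)
  case 1 then show ?case by simp
next
  case (2 x)
  then have "x = 0 \<or> x = 1" by (auto simp: binword_def)
  then show ?case
  proof
    assume "x = 0" then show ?thesis by (intro disjI2 exI[of _ "[]"] exI[of _ "[]"]) simp
  qed simp
next
  case (3 x y zs)
  have bx: "x = 0 \<or> x = 1" and hy: "y = 0 \<or> y = 1" and bz: "binword zs" and byz: "binword (y#zs)"
    using "3.prems" by (auto simp: binword_def)
  show ?case
  proof (cases "x = 1")
    case True
    from "3.IH"(2)[OF byz] show ?thesis
    proof
      assume "onezz (y # zs)" then show ?thesis using True by simp
    next
      assume "\<exists>v r. onezz v \<and> (y # zs = v @ [0] \<or> y # zs = v @ 0 # 1 # r)"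
      then obtain v r where "onezz v" "y # zs = v @ [0] \<or> y # zs = v @ 0 # 1 # r" by blast
      then show ?thesis using True by (intro disjI2 exI[of _ "1#v"] exI[of _ r]) auto
    qed
  next
    case False
    then have x0: "x = 0" using bx by simp
    show ?thesis
    proof (cases "y = 1")
      case True then show ?thesis using x0 by (intro disjI2 exI[of _ "[]"] exI[of _ zs]) auto
    next
      case False
      then have y0: "y = 0" using hy by simp
      from "3.IH"(1)[OF bz] show ?thesis
      proof
        assume "onezz zs" then show ?thesis using x0 y0 by simp
      next
        assume "\<exists>v r. onezz v \<and> (zs = v @ [0] \<or> zs = v @ 0 # 1 # r)"
        then obtain v r where "onezz v" "zs = v @ [0] \<or> zs = v @ 0 # 1 # r" by blast
        then show ?thesis using x0 y0 by (intro disjI2 exI[of _ "0#0#v"] exI[of _ r]) auto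
      qed
    qed
  qed
qed

lemma idx3: "(e::nat) < 3 \<Longrightarrow> e = 0 \<or> e = 1 \<or> e = 2" by auto

lemma dangling:
  assumes w: "w = v @ 0 # 1 # r" "onezz v"
  shows "onezz s \<Longrightarrow> length s < length v \<Longrightarrow> set U \<subseteq> {..<3} \<Longrightarrow>
    concat (map ((!) [[1],[0,0],w]) U) = s @ 0 # 1 # r @ y \<Longrightarrow> False"
proof (induction U arbitrary: s)
  case Nil then show ?case by simp
next
  case (Cons e U)
  have U: "set U \<subseteq> {..<3}" and e: "e = 0 \<or> e = 1 \<or> e = 2" using Cons.prems(3) idx3 by auto
  have eq: "[[1],[0,0],w] ! e @ concat (map ((!) [[1],[0,0],w]) U) = s @ 0 # 1 # r @ y"
    using Cons.prems(4) by simp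
  show ?case
  proof (cases s)
    case Nil
    from e show ?thesis
    proof (elim disjE)
      assume e2: "e = 2"
      have "s @ 0 # 1 # (r @ y) = v @ 0 # 1 # (r @ concat (map ((!) [[1],[0,0],w]) U))"
        using eq e2 w by simp
      then have "s = v" using onezz_G Cons.prems(1) w(2) by blast
      then show ?thesis using Cons.prems(2) by simp
    qed (use eq Nil in simp)+
  next
    case (Cons b s')
    have bc: "(b = 1 \<and> onezz s') \<or> (b = 0 \<and> (\<exists>s''. s' = 0 # s'' \<and> onezz s''))"
      using Cons.prems(1) \<open>s = b # s'\<close> onezz_Cons_cases by blast
    from e show ?thesis
    proof (elim disjE)
      assume e0: "e = 0"
      from bc show ?thesis
      proof
        assume h: "b = 1 \<and> onezz s'"
        have "concat (map ((!) [[1],[0,0],w]) U) = s' @ 0 # 1 # r @ y"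
          using eq e0 h \<open>s = b # s'\<close> by simp
        then show ?thesis using Cons.IH[of s'] h U Cons.prems(2) \<open>s = b # s'\<close> by simp
      next
        assume "b = 0 \<and> (\<exists>s''. s' = 0 # s'' \<and> onezz s'')"
        then show ?thesis using eq e0 \<open>s = b # s'\<close> by auto
      qed
    next
      assume e1: "e = 1"
      from bc show ?thesis
      proof
        assume h: "b = 1 \<and> onezz s'"
        then show ?thesis using eq e1 \<open>s = b # s'\<close> by simp
      next
        assume "b = 0 \<and> (\<exists>s''. s' = 0 # s'' \<and> onezz s'')"
        then obtain s'' where h: "b = 0" "s' = 0 # s''" "onezz s''" by blast
        have "concat (map ((!) [[1],[0,0],w]) U) = s'' @ 0 # 1 # r @ y"
          using eq e1 h \<open>s = b # s'\<close> by simp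
        then show ?thesis using Cons.IH[of s''] h U Cons.prems(2) \<open>s = b # s'\<close> by simp
      qed
    next
      assume e2: "e = 2"
      have "s @ 0 # 1 # (r @ y) = v @ 0 # 1 # (r @ concat (map ((!) [[1],[0,0],w]) U))"
        using eq e2 w by simp
      then have "s = v" using onezz_G Cons.prems(1) w(2) by blast
      then show ?thesis using Cons.prems(2) by simp
    qed
  qed
qed

lemma conflict_lt:
  assumes w: "w = v @ 0 # 1 # r" "onezz v"
  assumes pq: "p < q" "q < 3" and U: "set U \<subseteq> {..<3}"
    and eq: "[[1],[0,0],w] ! p @ concat (map ((!) [[1],[0,0],w]) U) = [[1],[0,0],w] ! q @ Y"
  shows False
proof -
  let ?C = "[[1],[0,0],w]"
  have cs: "(p = 0 \<and> q = 1) \<or> (p = 0 \<and> q = 2) \<or> (p = 1 \<and> q = 2)" using pq by auto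
  then show False
  proof (elim disjE)
    assume "p = 0 \<and> q = 1" then show False using eq by simp
  next
    assume pq2: "p = 0 \<and> q = 2"
    show False
    proof (cases v)
      case Nil then show False using eq pq2 w by simp
    next
      case (Cons b v')
      have bc: "(b = 1 \<and> onezz v') \<or> (b = 0 \<and> (\<exists>s''. v' = 0 # s'' \<and> onezz s''))"
        using w(2) Cons onezz_Cons_cases by blast
      then show False
      proof
        assume h: "b = 1 \<and> onezz v'"
        have "concat (map ((!) ?C) U) = v' @ 0 # 1 # r @ Y" using eq pq2 w Cons h by simp
        then show False using dangling[OF w, of v' U Y] h U Cons by simp
      next
        assume "b = 0 \<and> (\<exists>s''. v' = 0 # s'' \<and> onezz s'')"
        then show False using eq pq2 w Cons by auto
      qed
    qed
  next
    assume pq2: "p = 1 \<and> q = 2"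
    show False
    proof (cases v)
      case Nil then show False using eq pq2 w by simp
    next
      case (Cons b v')
      have bc: "(b = 1 \<and> onezz v') \<or> (b = 0 \<and> (\<exists>s''. v' = 0 # s'' \<and> onezz s''))"
        using w(2) Cons onezz_Cons_cases by blast
      then show False
      proof
        assume h: "b = 1 \<and> onezz v'"
        then show False using eq pq2 w Cons by simp
      next
        assume "b = 0 \<and> (\<exists>s''. v' = 0 # s'' \<and> onezz s'')"
        then obtain s'' where h: "b = 0" "v' = 0 # s''" "onezz s''" by blast
        have "concat (map ((!) ?C) U) = s'' @ 0 # 1 # r @ Y" using eq pq2 w Cons h by simp
        then show False using dangling[OF w, of s'' U Y] h U Cons by simp
      qed
    qed
  qed
qed

lemma codeA:
  assumes w: "w = v @ 0 # 1 # r" "onezz v"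
  shows "is_code [[1],[0,0],w]"
proof -
  let ?C = "[[1],[0,0],w]"
  have ne: "\<And>e. e < 3 \<Longrightarrow> ?C ! e \<noteq> []" using w by (auto dest!: idx3)
  have empty: "\<And>js. set js \<subseteq> {..<3} \<Longrightarrow> concat (map ((!) ?C) js) = [] \<Longrightarrow> js = []"
  proof -
    fix js :: "nat list" assume "set js \<subseteq> {..<3}" "concat (map ((!) ?C) js) = []"
    then show "js = []" using ne by (cases js) auto
  qed
  have main: "\<And>js. set is \<subseteq> {..<3} \<Longrightarrow> set js \<subseteq> {..<3} \<Longrightarrow>
      concat (map ((!) ?C) is) = concat (map ((!) ?C) js) \<Longrightarrow> is = js" for "is"
  proof (induction "is")
    case Nil then show ?case using empty[of js] Nil.prems by simp
  next
    case (Cons p is')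
    show ?case
    proof (cases js)
      case Nil then show ?thesis using Cons.prems empty[of "p # is'"] by simp
    next
      case (Cons q js')
      have p3: "p < 3" "set is' \<subseteq> {..<3}" and q3: "q < 3" "set js' \<subseteq> {..<3}"
        using Cons.prems \<open>js = q # js'\<close> by auto
      have eq: "?C ! p @ concat (map ((!) ?C) is') = ?C ! q @ concat (map ((!) ?C) js')"
        using Cons.prems(3) \<open>js = q # js'\<close> by simp
      show ?thesis
      proof (cases "p = q")
        case True
        then have "concat (map ((!) ?C) is') = concat (map ((!) ?C) js')" using eq by simp
        then show ?thesis using Cons.IH p3 q3 True \<open>js = q # js'\<close> by simp
      next
        case False
        show ?thesis
        proof (cases "p < q")
          case True then show ?thesis using conflict_lt[OF w True q3(1) p3(2) eq] by simp
        next
          case False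
          then have "q < p" using \<open>p \<noteq> q\<close> by simp
          then show ?thesis using conflict_lt[OF w \<open>q < p\<close> p3(1) q3(2) eq[symmetric]] by simp
        qed
      qed
    qed
  qed
  show ?thesis unfolding is_code_def using main by (simp add: numeral_3_eq_3)
qed

lemma concat_rev_idx:
  assumes "set is \<subseteq> {..<length C}"
  shows "concat (map ((!) (map rev C)) (rev is)) = rev (concat (map ((!) C) is))"
proof -
  have "map ((!) (map rev C)) (rev is) = map rev (rev (map ((!) C) is))"
    using assms by (simp add: rev_map subset_iff)
  then show ?thesis by (simp add: rev_concat)
qed

lemma code_rev:
  assumes "is_code (map rev C)" shows "is_code C"
  unfolding is_code_def
proof (intro allI impI)
  fix "is" js
  assume h: "is \<noteq> []" "js \<noteq> []" "set is \<subseteq> {..<length C}" "set js \<subseteq> {..<length C}"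
    "concat (map ((!) C) is) = concat (map ((!) C) js)"
  have "concat (map ((!) (map rev C)) (rev is)) = concat (map ((!) (map rev C)) (rev js))"
    using concat_rev_idx[OF h(3)] concat_rev_idx[OF h(4)] h(5) by simp
  then have "rev is = rev js"
    using assms[unfolded is_code_def, rule_format, of "rev is" "rev js"] h(1-4) by simp
  then show "is = js" by simp
qed

lemma onezz_rep0: "onezz (replicate (2*k) 0)"
  by (induction k) simp_all

lemma onezz_rep0_odd: "\<not> onezz (replicate (Suc (2*k)) 0)"
  by (induction k) simp_all

lemma codeB:
  assumes w: "w = v @ [0]" "onezz v" "1 \<in> set v"
  shows "is_code [[1],[0,0],w]"
proof -
  have "onezz (rev v)" "1 \<in> set (rev v)" using w onezz_rev by auto
  then obtain k y where ky: "rev v = replicate (2*k) 0 @ 1 # y" using onezz_nonempty_one by blast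
  have "map rev [[1],[0,0],w] = [[1],[0,0], replicate (2*k) 0 @ 0 # 1 # y]"
    using w(1) ky by (simp add: replicate_append_same)
  moreover have "is_code [[1],[0,0], replicate (2*k) 0 @ 0 # 1 # y]"
    by (rule codeA[OF refl onezz_rep0])
  ultimately show ?thesis using code_rev by metis
qed

lemma onezz_fact:
  "onezz w \<Longrightarrow> \<exists>is. set is \<subseteq> {0,1} \<and> concat (map ((!) [[1],[0,0],u]) is) = w"
proof (induction w rule: onezz.induct)
  case oz_nil then show ?case by (intro exI[of _ "[]"]) simp
next
  case (oz_one s)
  then obtain "is" where "set is \<subseteq> {0,1}" "concat (map ((!) [[1],[0,0],u]) is) = s" by blast
  then show ?case by (intro exI[of _ "0 # is"]) simp
next
  case (oz_zz s)
  then obtain "is" where "set is \<subseteq> {0,1}" "concat (map ((!) [[1],[0,0],u]) is) = s" by blast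
  then show ?case by (intro exI[of _ "1 # is"]) simp
qed

lemma rep1: "concat (map ((!) [[1],[0,0],u]) (replicate c 1)) = replicate (2*c) 0"
  by (induction c) simp_all

lemma notcode_iff:
  assumes b: "binword w" and ne: "w \<noteq> []"
  shows "\<not> is_code [[1],[0,0],w] \<longleftrightarrow> onezz w \<or> w = replicate (length w) 0"
proof
  assume nc: "\<not> is_code [[1],[0,0],w]"
  show "onezz w \<or> w = replicate (length w) 0"
  proof (rule ccontr)
    assume nn: "\<not> (onezz w \<or> w = replicate (length w) 0)"
    then obtain v r where vr: "onezz v" "w = v @ [0] \<or> w = v @ 0 # 1 # r" using decomp[OF b] by blast
    from vr(2) show False
    proof
      assume w: "w = v @ [0]"
      show False
      proof (cases "1 \<in> set v")
        case True then show False using codeB[OF w vr(1)] nc by simp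
      next
        case False
        have "\<forall>y\<in>set v. y = 0" using False b w by (auto simp: binword_def)
        then have "replicate (length v) 0 = v" by (rule replicate_length_same)
        then have "w = replicate (length w) 0" using w by (metis length_append_singleton replicate_Suc replicate_append_same)
        then show False using nn by simp
      qed
    next
      assume w: "w = v @ 0 # 1 # r"
      then show False using codeA[OF w vr(1)] nc by simp
    qed
  qed
next
  assume "onezz w \<or> w = replicate (length w) 0"
  then show "\<not> is_code [[1],[0,0],w]"
  proof
    assume "onezz w"
    then obtain "is" where his: "set is \<subseteq> {0,1}" "concat (map ((!) [[1],[0,0],w]) is) = w"
      using onezz_fact by blast
    have "is \<noteq> []" using his ne by auto
    moreover have "is \<noteq> [2]" using his by auto
    moreover have "set is \<subseteq> {..<length [[1],[0,0],w]}" using his by auto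
    ultimately show ?thesis
    proof (intro notI)
      assume a: "is_code [[1],[0,0],w]" "is \<noteq> []" "is \<noteq> [2]" "set is \<subseteq> {..<length [[1],[0,0],w]}"
      have "set [2::nat] \<subseteq> {..<length [[1],[0,0],w]}" by simp
      then show False using a(1)[unfolded is_code_def, rule_format, of "is" "[2]"] his(2)
        \<open>is \<noteq> []\<close> \<open>is \<noteq> [2]\<close> \<open>set is \<subseteq> {..<length [[1],[0,0],w]}\<close> by simp
    qed
  next
    assume w: "w = replicate (length w) 0"
    let ?c = "length w"
    have "concat (map ((!) [[1],[0,0],w]) [2,2]) = replicate (2 * ?c) 0"
    proof -
      have "concat (map ((!) [[1],[0,0],w]) [2,2]) = w @ w" by simp
      also have "\<dots> = replicate (2 * ?c) 0" using w by (metis mult_2 replicate_add)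
      finally show ?thesis .
    qed
    moreover have "concat (map ((!) [[1],[0,0],w]) (replicate ?c 1)) = replicate (2 * ?c) 0" by (rule rep1)
    moreover have "[2,2] \<noteq> replicate ?c (1::nat)" using ne by (cases ?c) auto
    moreover have "replicate ?c (1::nat) \<noteq> []" using ne by simp
    moreover have "set (replicate ?c (1::nat)) \<subseteq> {..<length [[1],[0,0],w]}" by auto
    ultimately show ?thesis
    proof (intro notI)
      assume a: "is_code [[1],[0,0],w]"
        "concat (map ((!) [[1],[0,0],w]) [2,2]) = replicate (2 * ?c) 0"
        "concat (map ((!) [[1],[0,0],w]) (replicate ?c 1)) = replicate (2 * ?c) 0"
        "[2,2] \<noteq> replicate ?c (1::nat)" "replicate ?c (1::nat) \<noteq> []"
        "set (replicate ?c (1::nat)) \<subseteq> {..<length [[1],[0,0],w]}"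
      have "set [2::nat,2] \<subseteq> {..<length [[1],[0,0],w]}" by simp
      then show False using a(1)[unfolded is_code_def, rule_format, of "[2,2]" "replicate ?c 1"] a(2-6)
        by simp
    qed
  qed
qed

lemma onezz_rep1: "onezz (replicate n 1)" by (induction n) simp_all
lemma onezz_rep1': "onezz (replicate n (Suc 0))" by (induction n) simp_all
lemma onezz_zz: "onezz (concat (replicate n [0,0]))" by (induction n) simp_all

lemma blocks_onezz:
  "onezz (concat (map (\<lambda>l. replicate (i l) 1 @ concat (replicate (j l) [0,0])) [0..<k]))"
  by (induction k) (simp_all add: onezz_append onezz_rep1' onezz_zz)

lemma onezz_blocks:
  "onezz w \<Longrightarrow> \<exists>k\<ge>1. \<exists>i j :: nat \<Rightarrow> nat.
     w = concat (map (\<lambda>l. replicate (i l) 1 @ concat (replicate (j l) [0,0])) [0..<k])"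
proof (induction w rule: onezz.induct)
  case oz_nil
  show ?case by (intro exI[of _ 1] conjI exI[of _ "\<lambda>_. 0"]) simp_all
next
  case (oz_one s)
  then obtain k i j where k: "k \<ge> 1"
    "s = concat (map (\<lambda>l. replicate (i l) 1 @ concat (replicate (j l) [0,0])) [0..<k])" by blast
  let ?i = "\<lambda>l. if l = 0 then 1 else i (l - 1)"
  let ?j = "\<lambda>l. if l = 0 then 0 else j (l - 1)"
  have "1 # s = concat (map (\<lambda>l. replicate (?i l) 1 @ concat (replicate (?j l) [0,0])) [0..<Suc k])"
    using k by (simp only: map_upt_Suc) simp
  then show ?case by (intro exI[of _ "Suc k"] conjI exI[of _ ?i] exI[of _ ?j]) simp_all
next
  case (oz_zz s)
  then obtain k i j where k: "k \<ge> 1"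
    "s = concat (map (\<lambda>l. replicate (i l) 1 @ concat (replicate (j l) [0,0])) [0..<k])" by blast
  let ?i = "\<lambda>l. if l = 0 then 0 else i (l - 1)"
  let ?j = "\<lambda>l. if l = 0 then 1 else j (l - 1)"
  have "0 # 0 # s = concat (map (\<lambda>l. replicate (?i l) 1 @ concat (replicate (?j l) [0,0])) [0..<Suc k])"
    using k by (simp only: map_upt_Suc) simp
  then show ?case by (intro exI[of _ "Suc k"] conjI exI[of _ ?i] exI[of _ ?j]) simp_all
qed

definition S :: "nat \<Rightarrow> word set" where "S n = {w. onezz w \<and> length w = n}"

lemma J_S: "J_set c = S c"
  unfolding J_set_def S_def using onezz_blocks blocks_onezz onezz_bin by blast

lemma S_finite: "finite (S n)"
proof -
  have "S n \<subseteq> {xs. set xs \<subseteq> {0,1} \<and> length xs = n}"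
    unfolding S_def using onezz_bin binword_def by blast
  moreover have "finite {xs. set xs \<subseteq> {0::nat,1} \<and> length xs = n}"
    by (rule finite_lists_length_eq) simp
  ultimately show ?thesis by (rule finite_subset)
qed

lemma S_rec: "S (Suc (Suc n)) = (Cons 1) ` S (Suc n) \<union> (\<lambda>w. 0 # 0 # w) ` S n"
proof
  show "S (Suc (Suc n)) \<subseteq> (Cons 1) ` S (Suc n) \<union> (\<lambda>w. 0 # 0 # w) ` S n"
  proof
    fix w assume "w \<in> S (Suc (Suc n))"
    then have w: "onezz w" "length w = Suc (Suc n)" unfolding S_def by auto
    then obtain a w' where aw: "w = a # w'" by (cases w) auto
    have "(a = 1 \<and> onezz w') \<or> (a = 0 \<and> (\<exists>s'. w' = 0 # s' \<and> onezz s'))"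
      using w(1) aw onezz_Cons_cases by blast
    then show "w \<in> (Cons 1) ` S (Suc n) \<union> (\<lambda>w. 0 # 0 # w) ` S n"
      using w(2) aw unfolding S_def by auto
  qed
next
  show "(Cons 1) ` S (Suc n) \<union> (\<lambda>w. 0 # 0 # w) ` S n \<subseteq> S (Suc (Suc n))"
    unfolding S_def by auto
qed

lemma S_card: "card (S n) = fib (Suc n) \<and> card (S (Suc n)) = fib (Suc (Suc n))"
proof (induction n)
  case 0
  have "S 0 = {[]}" unfolding S_def by auto
  moreover have "S 1 = {[1]}"
  proof
    show "S 1 \<subseteq> {[1]}"
    proof
      fix w assume "w \<in> S 1"
      then have w: "onezz w" "length w = 1" unfolding S_def by auto
      then obtain a where a: "w = [a]" by (cases w) auto
      have "(a = 1 \<and> onezz []) \<or> (a = 0 \<and> (\<exists>s'. ([]::nat list) = 0 # s' \<and> onezz s'))"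
        using w(1) a onezz_Cons_cases by blast
      then show "w \<in> {[1]}" using a by simp
    qed
  qed (simp add: S_def)
  ultimately show ?case by simp
next
  case (Suc n)
  have "card (S (Suc (Suc n))) = card ((Cons 1) ` S (Suc n)) + card ((\<lambda>w. 0 # 0 # w) ` S n)"
    unfolding S_rec by (rule card_Un_disjoint) (auto simp: S_finite)
  also have "\<dots> = card (S (Suc n)) + card (S n)"
    by (subst card_image, simp add: inj_on_def)+ simp
  finally show ?case using Suc by simp
qed

theorem proposition3:
  fixes c :: nat
  assumes "c \<ge> 1"
  shows "K_tilde c = J_set c \<union> {replicate c 0} \<and>
         card (K_tilde c) = fib (c + 1) + c mod 2"
proof -
  have K: "K_tilde c = J_set c \<union> {replicate c 0}"
  proof (rule set_eqI)
    fix w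
    show "w \<in> K_tilde c \<longleftrightarrow> w \<in> J_set c \<union> {replicate c 0}"
    proof (cases "binword w \<and> length w = c")
      case True
      then have "w \<noteq> []" using assms by auto
      have lc: "length w = c" using True by simp
      have "w \<in> K_tilde c \<longleftrightarrow> \<not> is_code [[1],[0,0],w]" unfolding K_tilde_def using True by simp
      also have "\<dots> \<longleftrightarrow> onezz w \<or> w = replicate (length w) 0" using notcode_iff[of w] True \<open>w \<noteq> []\<close> by blast
      also have "\<dots> \<longleftrightarrow> w = replicate c 0 \<or> onezz w" unfolding lc by (rule disj_commute)
      also have "\<dots> \<longleftrightarrow> w \<in> J_set c \<union> {replicate c 0}" using True unfolding J_S S_def by simp
      finally show ?thesis .
    next
      case False
      moreover have "binword (replicate c 0)" by (cases "c = 0") (auto simp: binword_def)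
      ultimately have "w \<notin> K_tilde c" "w \<notin> J_set c \<union> {replicate c 0}"
        unfolding K_tilde_def J_S S_def using onezz_bin by auto
      then show ?thesis by blast
    qed
  qed
  have SC: "card (S c) = fib (c + 1)" using S_card[of c] by simp
  have "card (S c \<union> {replicate c 0}) = fib (c + 1) + c mod 2"
  proof (cases "even c")
    case True
    have ce: "2 * (c div 2) = c" using True by presburger
    have "onezz (replicate (2 * (c div 2)) 0)" by (rule onezz_rep0)
    then have "replicate c 0 \<in> S c" unfolding S_def by (simp only: ce) simp
    then have "S c \<union> {replicate c 0} = S c" by blast
    moreover have "c mod 2 = 0" using True by presburger
    ultimately show ?thesis using SC by simp
  next
    case False
    have ce: "Suc (2 * (c div 2)) = c" using False by presburger
    have "\<not> onezz (replicate (Suc (2 * (c div 2))) 0)" by (rule onezz_rep0_odd)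
    then have "replicate c 0 \<notin> S c" unfolding S_def by (simp only: ce) simp
    then have "card (insert (replicate c 0) (S c)) = Suc (card (S c))"
      by (rule card_insert_disjoint[OF S_finite])
    moreover have "c mod 2 = 1" using False by presburger
    ultimately show ?thesis using SC by simp
  qed
  then show ?thesis using K J_S by simp
qed

end
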